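(* If the supply graph $G$ is a cycle and the demand digraph $H=(T,L)$ has at most two OD-pairs ($|L|\le 2$), then $(G,H)$ has the uniqueness property.
   Context: A supply graph is a finite undirected graph $G=(V,E)$ with directed version obtained by replacing each edge by two opposite arcs; a demand digraph is a simple digraph $H=(T,L)$ with $T\subseteq V$, whose arcs are OD-pairs; routes for $(o,d)\in L$ are directed $(o,d)$-paths in the directed version of $G$. Users (a bounded interval with Lebesgue measure, partitioned measurably by OD-pair) choose routes; flows are measures of users using each arc; each user has nonnegative continuous strictly increasing arc cost functions (measurable in the user); an equilibrium is a profile where every user takes a minimal-cost route. $(G,H)$ has the uniqueness property if for every measurable partition of users into OD-pairs and every such cost assignment, the flow on each arc is the same in all equilibria. *)

theory Defs
  imports "HOL-Analysis.Analysis"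
begin

definition supply_graph :: "'v set \<Rightarrow> 'v set set \<Rightarrow> bool" where
  "supply_graph V E \<longleftrightarrow> finite V \<and>
     (\<forall>e\<in>E. \<exists>u v. u \<in> V \<and> v \<in> V \<and> u \<noteq> v \<and> e = {u, v})"

definition is_cycle :: "'v set \<Rightarrow> 'v set set \<Rightarrow> bool" where
  "is_cycle V E \<longleftrightarrow> supply_graph V E \<and>
     (\<exists>n f. n \<ge> 3 \<and> bij_betw f {..<n} V \<and> E = {{f i, f (Suc i mod n)} | i. i < n})"

definition demand_digraph :: "'v set \<Rightarrow> 'v set \<Rightarrow> ('v \<times> 'v) set \<Rightarrow> bool" where
  "demand_digraph V T L \<longleftrightarrow> T \<subseteq> V \<and> L \<subseteq> T \<times> T \<and> (\<forall>(s, t)\<in>L. s \<noteq> t)"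

definition darcs :: "'v set set \<Rightarrow> ('v \<times> 'v) set" where
  "darcs E = {(u, v). {u, v} \<in> E}"

definition is_route :: "'v set set \<Rightarrow> 'v \<Rightarrow> 'v \<Rightarrow> 'v list \<Rightarrow> bool" where
  "is_route E s t p \<longleftrightarrow> p \<noteq> [] \<and> distinct p \<and> hd p = s \<and> last p = t \<and>
     (\<forall>i. Suc i < length p \<longrightarrow> (p ! i, p ! Suc i) \<in> darcs E)"

definition route_arcs :: "'v list \<Rightarrow> ('v \<times> 'v) set" where
  "route_arcs p = set (zip p (tl p))"

definition flow :: "real set \<Rightarrow> (real \<Rightarrow> 'v list) \<Rightarrow> ('v \<times> 'v) \<Rightarrow> real" where
  "flow I \<sigma> e = measure lebesgue {x \<in> I. e \<in> route_arcs (\<sigma> x)}"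

definition route_cost ::
  "(real \<Rightarrow> ('v \<times> 'v) \<Rightarrow> real \<Rightarrow> real) \<Rightarrow> real \<Rightarrow> 'v list \<Rightarrow> (('v \<times> 'v) \<Rightarrow> real) \<Rightarrow> real" where
  "route_cost c x p F = (\<Sum>e\<in>route_arcs p. c x e (F e))"

definition valid_partition :: "('v \<times> 'v) set \<Rightarrow> real set \<Rightarrow> (real \<Rightarrow> 'v \<times> 'v) \<Rightarrow> bool" where
  "valid_partition L I od \<longleftrightarrow> (\<forall>x\<in>I. od x \<in> L) \<and> (\<forall>l\<in>L. {x \<in> I. od x = l} \<in> sets lebesgue)"

definition valid_costs :: "'v set set \<Rightarrow> real set \<Rightarrow> (real \<Rightarrow> ('v \<times> 'v) \<Rightarrow> real \<Rightarrow> real) \<Rightarrow> bool" where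
  "valid_costs E I c \<longleftrightarrow> (\<forall>e\<in>darcs E.
      (\<forall>x\<in>I. continuous_on {0..} (c x e) \<and> strict_mono_on {0..} (c x e) \<and> (\<forall>t\<ge>0. c x e t \<ge> 0)) \<and>
      (\<forall>t. (\<lambda>x. c x e t) \<in> borel_measurable (restrict_space lebesgue I)))"

definition is_equilibrium ::
  "'v set set \<Rightarrow> real set \<Rightarrow> (real \<Rightarrow> 'v \<times> 'v) \<Rightarrow> (real \<Rightarrow> ('v \<times> 'v) \<Rightarrow> real \<Rightarrow> real) \<Rightarrow> (real \<Rightarrow> 'v list) \<Rightarrow> bool" where
  "is_equilibrium E I od c \<sigma> \<longleftrightarrow>
     (\<forall>p. {x \<in> I. \<sigma> x = p} \<in> sets lebesgue) \<and>
     (\<forall>x\<in>I. is_route E (fst (od x)) (snd (od x)) (\<sigma> x) \<and>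
        (\<forall>q. is_route E (fst (od x)) (snd (od x)) q \<longrightarrow>
             route_cost c x (\<sigma> x) (flow I \<sigma>) \<le> route_cost c x q (flow I \<sigma>)))"

definition uniqueness_property ::
  "real set \<Rightarrow> 'v set \<Rightarrow> 'v set set \<Rightarrow> 'v set \<Rightarrow> ('v \<times> 'v) set \<Rightarrow> bool" where
  "uniqueness_property I V E T L \<longleftrightarrow>
     (\<forall>(od :: real \<Rightarrow> 'v \<times> 'v) c \<sigma>1 \<sigma>2.
        valid_partition L I od \<longrightarrow> valid_costs E I c \<longrightarrow>
        is_equilibrium E I od c \<sigma>1 \<longrightarrow> is_equilibrium E I od c \<sigma>2 \<longrightarrow>
        (\<forall>e\<in>darcs E. flow I \<sigma>1 e = flow I \<sigma>2 e))"

end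

theory Submission
  imports Defs
begin



lemma route_arcs_iff: "(a,b) \<in> route_arcs p \<longleftrightarrow> (\<exists>i. Suc i < length p \<and> a = p!i \<and> b = p!Suc i)"
proof
  assume "(a,b) \<in> route_arcs p"
  then obtain i where "p!i = a" "tl p ! i = b" "i < length p" "i < length (tl p)"
    unfolding route_arcs_def in_set_zip by auto
  then show "\<exists>i. Suc i < length p \<and> a = p!i \<and> b = p!Suc i" by (intro exI[of _ i]) (auto simp: nth_tl)
next
  assume "\<exists>i. Suc i < length p \<and> a = p!i \<and> b = p!Suc i"
  then obtain i where "Suc i < length p" "a = p!i" "b = p!Suc i" by blast
  then show "(a,b) \<in> route_arcs p" unfolding route_arcs_def in_set_zip
    by (intro exI[of _ i]) (auto simp: nth_tl)
qed

lemma route_arcs_ne: "2 \<le> length p \<Longrightarrow> route_arcs p \<noteq> {}"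
proof -
  assume "2 \<le> length p"
  then have "(p!0, p!Suc 0) \<in> route_arcs p" unfolding route_arcs_iff by (intro exI[of _ 0]) auto
  then show ?thesis by auto
qed

lemma route_arcs_el: "Suc i < length p \<Longrightarrow> (p!i, p!Suc i) \<in> route_arcs p"
  unfolding route_arcs_iff by blast

lemma route_arcs_sub: "(\<And>i. Suc i < length p \<Longrightarrow> (p!i, p!Suc i) \<in> R) \<Longrightarrow> route_arcs p \<subseteq> R"
proof
  fix e assume H: "\<And>i. Suc i < length p \<Longrightarrow> (p!i, p!Suc i) \<in> R" and e: "e \<in> route_arcs p"
  obtain a b where ab: "e = (a,b)" by (cases e)
  then have "\<exists>i. Suc i < length p \<and> a = p!i \<and> b = p!Suc i" using e by (simp only: route_arcs_iff)
  then show "e \<in> R" using H ab by blast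
qed

lemma route_unique:
  assumes "distinct p" "distinct q" "p \<noteq> []" "q \<noteq> []" "hd p = hd q" "last p = last q"
    "single_valued R" "route_arcs p \<subseteq> R" "route_arcs q \<subseteq> R"
  shows "p = q"
proof -
  have pre: "i < length p \<longrightarrow> i < length q \<longrightarrow> p!i = q!i" for i
  proof (induction i)
    case 0 then show ?case using assms(5) hd_conv_nth[OF assms(3)] hd_conv_nth[OF assms(4)] by simp
  next
    case (Suc i)
    show ?case
    proof (intro impI)
      assume a: "Suc i < length p" "Suc i < length q"
      have "(p!i, p!Suc i) \<in> route_arcs p" unfolding route_arcs_iff using a by blast
      then have "(p!i, p!Suc i) \<in> R" using assms(8) by blast
      moreover have "(q!i, q!Suc i) \<in> route_arcs q" unfolding route_arcs_iff using a by blast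
      then have "(q!i, q!Suc i) \<in> R" using assms(9) by blast
      moreover have "p!i = q!i" using Suc a by simp
      ultimately show "p!Suc i = q!Suc i" using single_valuedD[OF assms(7)] by metis
    qed
  qed
  have len: "length p = length q"
  proof (rule ccontr)
    assume ne: "length p \<noteq> length q"
    show False
    proof (cases "length p < length q")
      case True
      have "q!(length p - 1) = p!(length p - 1)" using pre[of "length p - 1"] True assms by simp
      also have "\<dots> = last p" using last_conv_nth[OF assms(3)] by simp
      also have "\<dots> = last q" using assms(6) .
      also have "\<dots> = q!(length q - 1)" using last_conv_nth[OF assms(4)] by simp
      finally have "q!(length p - 1) = q!(length q - 1)" .
      moreover have "length p - 1 < length q" "length q - 1 < length q" using True assms by auto
      ultimately have "length p - 1 = length q - 1" using nth_eq_iff_index_eq[OF assms(2)] by blast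
      moreover have "length p > 0" "length q > 0" using assms by auto
      ultimately show False using True by linarith
    next
      case False
      then have F: "length q < length p" using ne by simp
      have "p!(length q - 1) = q!(length q - 1)" using pre[of "length q - 1"] F assms by simp
      also have "\<dots> = last q" using last_conv_nth[OF assms(4)] by simp
      also have "\<dots> = last p" using assms(6) by simp
      also have "\<dots> = p!(length p - 1)" using last_conv_nth[OF assms(3)] by simp
      finally have "p!(length q - 1) = p!(length p - 1)" .
      moreover have "length q - 1 < length p" "length p - 1 < length p" using F assms by auto
      ultimately have "length q - 1 = length p - 1" using nth_eq_iff_index_eq[OF assms(1)] by blast
      moreover have "length p > 0" "length q > 0" using assms by auto
      ultimately show False using F by linarith
    qed
  qed
  show ?thesis using pre len by (intro nth_equalityI) auto
qed

lemma arcs_endpoints: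
  assumes "distinct p" "distinct q" "2 \<le> length p" "2 \<le> length q" "route_arcs p = route_arcs q"
  shows "hd p = hd q \<and> last p = last q"
proof
  have "(p!0, p!Suc 0) \<in> route_arcs p" unfolding route_arcs_iff using assms(3) by (intro exI[of _ 0]) auto
  then have "(p!0, p!Suc 0) \<in> route_arcs q" using assms(5) by simp
  then have "\<exists>j. Suc j < length q \<and> p!0 = q!j \<and> p!Suc 0 = q!Suc j" by (simp only: route_arcs_iff)
  then obtain j where j: "Suc j < length q" "p!0 = q!j" by blast
  have "j = 0"
  proof (rule ccontr)
    assume "j \<noteq> 0"
    then obtain j' where jj: "j = Suc j'" by (cases j) auto
    have "(q!j', q!j) \<in> route_arcs q" unfolding route_arcs_iff using j jj by (intro exI[of _ j']) auto
    then have "(q!j', q!j) \<in> route_arcs p" using assms(5) by simp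
    then have "\<exists>i. Suc i < length p \<and> q!j' = p!i \<and> q!j = p!Suc i" by (simp only: route_arcs_iff)
    then obtain i where i: "Suc i < length p" "q!j = p!Suc i" by blast
    then have "p!0 = p!Suc i" using j by simp
    moreover have "0 < length p" using assms(3) by linarith
    ultimately have "0 = Suc i" using nth_eq_iff_index_eq[OF assms(1), of 0 "Suc i"] i(1) by blast
    then show False by simp
  qed
  moreover have "p \<noteq> []" "q \<noteq> []" using assms(3,4) by auto
  ultimately show "hd p = hd q" using j hd_conv_nth[of p] hd_conv_nth[of q] by auto
next
  define m where "m = length p - 2"
  have m: "Suc m < length p" "Suc m = length p - 1" using assms(3) unfolding m_def by auto
  have "(p!m, p!Suc m) \<in> route_arcs p" unfolding route_arcs_iff using m by (intro exI[of _ m]) auto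
  then have "(p!m, p!Suc m) \<in> route_arcs q" using assms(5) by simp
  then have "\<exists>j. Suc j < length q \<and> p!m = q!j \<and> p!Suc m = q!Suc j" by (simp only: route_arcs_iff)
  then obtain j where j: "Suc j < length q" "p!Suc m = q!Suc j" by blast
  have "Suc j = length q - 1"
  proof (rule ccontr)
    assume "Suc j \<noteq> length q - 1"
    then have jj: "Suc (Suc j) < length q" using j by simp
    have "(q!Suc j, q!Suc (Suc j)) \<in> route_arcs q" unfolding route_arcs_iff using jj by (intro exI[of _ "Suc j"]) auto
    then have "(q!Suc j, q!Suc (Suc j)) \<in> route_arcs p" using assms(5) by simp
    then have "\<exists>i. Suc i < length p \<and> q!Suc j = p!i \<and> q!Suc (Suc j) = p!Suc i" by (simp only: route_arcs_iff)
    then obtain i where i: "Suc i < length p" "q!Suc j = p!i" by blast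
    then have "p!Suc m = p!i" using j by simp
    then have "Suc m = i" using nth_eq_iff_index_eq[OF assms(1), of "Suc m" i] i(1) m(1) by simp
    then show False using i(1) m(2) by simp
  qed
  moreover have "p \<noteq> []" "q \<noteq> []" using assms(3,4) by auto
  ultimately show "last p = last q" using j m last_conv_nth[of p] last_conv_nth[of q] by auto
qed

locale cyc =
  fixes V :: "'v set" and E :: "'v set set" and n :: nat and f :: "nat \<Rightarrow> 'v"
  assumes n3: "3 \<le> n" and bij: "bij_betw f {..<n} V"
    and Edef: "E = {{f i, f (Suc i mod n)} | i. i < n}"
begin

definition cwA where "cwA = {(f i, f (Suc i mod n)) | i. i < n}"

lemma finj: "i < n \<Longrightarrow> j < n \<Longrightarrow> f i = f j \<Longrightarrow> i = j"
  using bij by (auto simp: bij_betw_def inj_on_def)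

lemma sucmod: "j < n \<Longrightarrow> Suc j mod n = (if Suc j = n then 0 else Suc j)"
  by auto

lemma darcs_eq: "darcs E = cwA \<union> cwA\<inverse>"
  unfolding darcs_def Edef cwA_def by (auto simp: doubleton_eq_iff)

lemma cw_disj: "cwA \<inter> cwA\<inverse> = {}"
proof -
  { fix i j assume ij: "i < n" "j < n" "(f i, f (Suc i mod n)) = (f (Suc j mod n), f j)"
    have "Suc j mod n < n" "Suc i mod n < n" using n3 by auto
    then have "i = Suc j mod n" "Suc i mod n = j" using ij finj by auto
    then have False using n3 ij by (auto simp: sucmod split: if_splits) }
  then show ?thesis unfolding cwA_def by auto
qed

lemma cw_sv: "(u,v) \<in> cwA \<Longrightarrow> (u,w) \<in> cwA \<Longrightarrow> v = w"
  unfolding cwA_def using finj by auto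

lemma cw_inj: "(u,v) \<in> cwA \<Longrightarrow> (w,v) \<in> cwA \<Longrightarrow> u = w"
proof -
  assume "(u,v) \<in> cwA" "(w,v) \<in> cwA"
  then obtain i j where ij: "i < n" "j < n" "u = f i" "w = f j" "f (Suc i mod n) = f (Suc j mod n)"
    unfolding cwA_def by auto
  have "Suc j mod n < n" "Suc i mod n < n" using n3 by auto
  then have "Suc i mod n = Suc j mod n" using ij finj by auto
  then have "i = j" using ij by (auto simp: sucmod split: if_splits)
  then show "u = w" using ij by simp
qed

lemma sv1: "single_valued cwA" using cw_sv by (auto simp: single_valued_def)
lemma sv2: "single_valued (cwA\<inverse>)" using cw_inj by (auto simp: single_valued_def)

lemma route_orient:
  assumes "is_route E s t p"
  shows "route_arcs p \<subseteq> cwA \<or> route_arcs p \<subseteq> cwA\<inverse>"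
proof (cases "length p < 2")
  case True
  then have "route_arcs p \<subseteq> {}" by (intro route_arcs_sub) auto
  then show ?thesis by simp
next
  case False
  have st: "Suc i < length p \<Longrightarrow> (p!i, p!Suc i) \<in> cwA \<union> cwA\<inverse>" for i
    using assms darcs_eq unfolding is_route_def by blast
  have dis: "distinct p" using assms unfolding is_route_def by auto
  have noSS: "Suc (Suc i) < length p \<Longrightarrow> p!i \<noteq> p!Suc (Suc i)" for i
    using nth_eq_iff_index_eq[OF dis] by simp
  show ?thesis
  proof (cases "(p!0, p!1) \<in> cwA")
    case True
    have "Suc i < length p \<longrightarrow> (p!i, p!Suc i) \<in> cwA" for i
    proof (induction i)
      case 0 then show ?case using True by simp
    next
      case (Suc i)
      show ?case
      proof
        assume a: "Suc (Suc i) < length p"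
        have h: "(p!i, p!Suc i) \<in> cwA" using Suc a by simp
        show "(p!Suc i, p!Suc (Suc i)) \<in> cwA"
        proof (rule ccontr)
          assume "(p!Suc i, p!Suc (Suc i)) \<notin> cwA"
          then have "(p!Suc (Suc i), p!Suc i) \<in> cwA" using st[OF a] by auto
          from cw_inj[OF h this] noSS[OF a] show False by simp
        qed
      qed
    qed
    then have "route_arcs p \<subseteq> cwA" by (intro route_arcs_sub) auto
    then show ?thesis by simp
  next
    case False
    then have F: "(p!0, p!1) \<in> cwA\<inverse>" using st[of 0] \<open>\<not> length p < 2\<close> by auto
    have "Suc i < length p \<longrightarrow> (p!i, p!Suc i) \<in> cwA\<inverse>" for i
    proof (induction i)
      case 0 then show ?case using F by simp
    next
      case (Suc i)
      show ?case
      proof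
        assume a: "Suc (Suc i) < length p"
        have h: "(p!Suc i, p!i) \<in> cwA" using Suc a by simp
        show "(p!Suc i, p!Suc (Suc i)) \<in> cwA\<inverse>"
        proof (rule ccontr)
          assume "(p!Suc i, p!Suc (Suc i)) \<notin> cwA\<inverse>"
          then have "(p!Suc i, p!Suc (Suc i)) \<in> cwA" using st[OF a] by auto
          from cw_sv[OF h this] noSS[OF a] show False by simp
        qed
      qed
    qed
    then have "route_arcs p \<subseteq> cwA\<inverse>" by (intro route_arcs_sub) auto
    then show ?thesis by simp
  qed
qed

end



locale setting = cyc V E n f for V :: "'v set" and E n f +
  fixes I :: "real set" and L :: "('v \<times> 'v) set" and od :: "real \<Rightarrow> 'v \<times> 'v"
    and c :: "real \<Rightarrow> ('v \<times> 'v) \<Rightarrow> real \<Rightarrow> real"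
  assumes bI: "bounded I" and vp: "valid_partition L I od" and vc: "valid_costs E I c"
    and finL: "finite L" and cardL: "card L \<le> 2" and Lne: "\<And>s t. (s,t) \<in> L \<Longrightarrow> s \<noteq> t"
begin

definition isr where "isr k p \<longleftrightarrow> is_route E (fst k) (snd k) p"
definition cwr where "cwr k p \<longleftrightarrow> isr k p \<and> route_arcs p \<subseteq> cwA"
definition ccr where "ccr k p \<longleftrightarrow> isr k p \<and> route_arcs p \<subseteq> cwA\<inverse>"
definition A where "A k = route_arcs (SOME p. cwr k p) \<inter> cwA"
definition B where "B k = route_arcs (SOME p. ccr k p) \<inter> cwA\<inverse>"
definition Ik where "Ik k = {x\<in>I. od x = k}"
definition CW where "CW \<sigma> k = {x\<in>I. od x = k \<and> route_arcs (\<sigma> x) \<subseteq> cwA}"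
definition alpha where "alpha \<sigma> k = measure lebesgue (CW \<sigma> k)"
definition mm where "mm k = measure lebesgue (Ik k)"

lemma isr_len: assumes "k \<in> L" "isr k p" shows "2 \<le> length p" "distinct p" "p \<noteq> []"
proof -
  obtain s t where k: "k = (s,t)" by (cases k)
  then have "s \<noteq> t" using Lne assms(1) by blast
  moreover have r: "p \<noteq> []" "distinct p" "hd p = s" "last p = t" using assms(2) k unfolding isr_def is_route_def by auto
  ultimately show "2 \<le> length p"
    by (metis Suc_1 Suc_leI hd_conv_nth last_conv_nth length_greater_0_conv diff_Suc_1 le_neq_implies_less le_antisym less_one not_less_eq_eq)
  show "distinct p" "p \<noteq> []" using r by auto
qed

lemma isr_arcs_ne: "k \<in> L \<Longrightarrow> isr k p \<Longrightarrow> route_arcs p \<noteq> {}"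
  using isr_len route_arcs_ne by blast

lemma cwr_unique: assumes "k \<in> L" "cwr k p" "cwr k q" shows "p = q"
proof -
  have "isr k p" "isr k q" using assms unfolding cwr_def by auto
  then show ?thesis using route_unique[OF _ _ _ _ _ _ sv1, of p q] assms isr_len[of k]
    unfolding cwr_def isr_def is_route_def by auto
qed

lemma ccr_unique: assumes "k \<in> L" "ccr k p" "ccr k q" shows "p = q"
proof -
  have "isr k p" "isr k q" using assms unfolding ccr_def by auto
  then show ?thesis using route_unique[OF _ _ _ _ _ _ sv2, of p q] assms isr_len[of k]
    unfolding ccr_def isr_def is_route_def by auto
qed

lemma cwr_A: assumes "k \<in> L" "cwr k p" shows "route_arcs p = A k"
proof -
  have "cwr k (SOME p. cwr k p)" using assms(2) by (rule someI)
  then have "(SOME p. cwr k p) = p" using cwr_unique assms by blast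
  then show ?thesis using assms(2) unfolding A_def cwr_def by auto
qed

lemma ccr_B: assumes "k \<in> L" "ccr k p" shows "route_arcs p = B k"
proof -
  have "ccr k (SOME p. ccr k p)" using assms(2) by (rule someI)
  then have "(SOME p. ccr k p) = p" using ccr_unique assms by blast
  then show ?thesis using assms(2) unfolding B_def ccr_def by auto
qed

lemma A_sub: "A k \<subseteq> cwA" unfolding A_def by auto
lemma B_sub: "B k \<subseteq> cwA\<inverse>" unfolding B_def by auto
lemma AB_disj: "a \<in> A k \<Longrightarrow> a \<in> B l \<Longrightarrow> False"
  using A_sub B_sub cw_disj by blast

lemma route_cases: assumes "k \<in> L" "isr k p"
  shows "(cwr k p \<and> \<not> ccr k p) \<or> (ccr k p \<and> \<not> cwr k p)"
proof -
  have "route_arcs p \<subseteq> cwA \<or> route_arcs p \<subseteq> cwA\<inverse>" using route_orient assms(2) unfolding isr_def by blast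
  moreover have "route_arcs p \<noteq> {}" using isr_arcs_ne assms by blast
  ultimately show ?thesis using cw_disj assms(2) unfolding cwr_def ccr_def by blast
qed

lemma eq_route: "is_equilibrium E I od c \<sigma> \<Longrightarrow> x \<in> I \<Longrightarrow> isr (od x) (\<sigma> x) \<and> od x \<in> L"
  using vp unfolding is_equilibrium_def valid_partition_def isr_def by auto

lemma lmeas: "S \<subseteq> I \<Longrightarrow> S \<in> sets lebesgue \<Longrightarrow> S \<in> lmeasurable"
  using bI bounded_subset bounded_set_imp_lmeasurable by blast

lemma Ik_meas: "k \<in> L \<Longrightarrow> Ik k \<in> sets lebesgue"
  using vp unfolding valid_partition_def Ik_def by auto

lemma CW_meas: assumes "is_equilibrium E I od c \<sigma>" "k \<in> L" shows "CW \<sigma> k \<in> sets lebesgue"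
proof (cases "\<exists>p. cwr k p")
  case True
  define P where "P = (SOME p. cwr k p)"
  have P: "cwr k P" unfolding P_def using True someI_ex by metis
  have "CW \<sigma> k = Ik k \<inter> {x\<in>I. \<sigma> x = P}"
  proof (intro set_eqI iffI)
    fix x assume x: "x \<in> CW \<sigma> k"
    then have "x \<in> I" "od x = k" "route_arcs (\<sigma> x) \<subseteq> cwA" unfolding CW_def by auto
    then have "cwr k (\<sigma> x)" using eq_route[OF assms(1)] unfolding cwr_def by auto
    then have "\<sigma> x = P" using cwr_unique[OF assms(2) _ P] by blast
    then show "x \<in> Ik k \<inter> {x\<in>I. \<sigma> x = P}" using x unfolding CW_def Ik_def by auto
  next
    fix x assume "x \<in> Ik k \<inter> {x\<in>I. \<sigma> x = P}"
    then show "x \<in> CW \<sigma> k" using P unfolding CW_def Ik_def cwr_def by auto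
  qed
  moreover have "{x\<in>I. \<sigma> x = P} \<in> sets lebesgue" using assms(1) unfolding is_equilibrium_def by blast
  ultimately show ?thesis using Ik_meas[OF assms(2)] by auto
next
  case False
  have "CW \<sigma> k = {}"
  proof (rule ccontr)
    assume "CW \<sigma> k \<noteq> {}"
    then obtain x where x: "x \<in> I" "od x = k" "route_arcs (\<sigma> x) \<subseteq> cwA" unfolding CW_def by auto
    then have "cwr k (\<sigma> x)" using eq_route[OF assms(1)] unfolding cwr_def by auto
    then show False using False by blast
  qed
  then show ?thesis by simp
qed

lemma CW_sub: "CW \<sigma> k \<subseteq> Ik k" unfolding CW_def Ik_def by auto

lemma fin_meas: "S \<subseteq> I \<Longrightarrow> S \<in> sets lebesgue \<Longrightarrow> emeasure lebesgue S \<noteq> \<infinity>"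
proof -
  assume "S \<subseteq> I" "S \<in> sets lebesgue"
  then have "S \<in> lmeasurable" using lmeas by blast
  then have "emeasure lebesgue S < \<infinity>" unfolding fmeasurable_def by blast
  then show ?thesis by (metis less_irrefl)
qed

lemma decomp:
  assumes eq: "is_equilibrium E I od c \<sigma>"
  shows "flow I \<sigma> a = (\<Sum>k\<in>L. (if a \<in> A k then alpha \<sigma> k else 0) + (if a \<in> B k then mm k - alpha \<sigma> k else 0))"
proof -
  define U where "U k = (if a \<in> A k then CW \<sigma> k else if a \<in> B k then Ik k - CW \<sigma> k else {})" for k
  have Usub: "U k \<subseteq> Ik k" for k unfolding U_def using CW_sub by auto
  have Umeas: "k \<in> L \<Longrightarrow> U k \<in> sets lebesgue" for k
    unfolding U_def using CW_meas[OF eq] Ik_meas by auto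
  have IkI: "Ik k \<subseteq> I" for k unfolding Ik_def by auto
  have "{x \<in> I. a \<in> route_arcs (\<sigma> x)} = (\<Union>k\<in>L. U k)"
  proof (intro set_eqI iffI)
    fix x assume x: "x \<in> {x \<in> I. a \<in> route_arcs (\<sigma> x)}"
    define k where "k = od x"
    have r: "isr k (\<sigma> x)" "k \<in> L" using eq_route[OF eq] x k_def by auto
    have "x \<in> U k"
    proof (cases "cwr k (\<sigma> x)")
      case True
      then have "a \<in> A k" using cwr_A[OF r(2) True] x by auto
      then show ?thesis using x True unfolding U_def CW_def k_def cwr_def by auto
    next
      case False
      then have cc: "ccr k (\<sigma> x)" using route_cases[OF r(2,1)] by blast
      then have aB: "a \<in> B k" using ccr_B[OF r(2) cc] x by auto
      then have "a \<notin> A k" using AB_disj by blast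
      moreover have "x \<notin> CW \<sigma> k" using False r unfolding CW_def cwr_def k_def by auto
      ultimately show ?thesis using x aB unfolding U_def Ik_def k_def by auto
    qed
    then show "x \<in> (\<Union>k\<in>L. U k)" using r by auto
  next
    fix x assume "x \<in> (\<Union>k\<in>L. U k)"
    then obtain k where k: "k \<in> L" "x \<in> U k" by auto
    then have xI: "x \<in> I" "od x = k" using Usub[of k] unfolding Ik_def by blast+
    then have r: "isr k (\<sigma> x)" using eq_route[OF eq] by auto
    show "x \<in> {x \<in> I. a \<in> route_arcs (\<sigma> x)}"
    proof (cases "a \<in> A k")
      case True
      then have "x \<in> CW \<sigma> k" using k unfolding U_def by auto
      then have "cwr k (\<sigma> x)" using r unfolding CW_def cwr_def by auto
      then show ?thesis using cwr_A[OF k(1)] True xI by auto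
    next
      case False
      then have "a \<in> B k" "x \<notin> CW \<sigma> k" using k unfolding U_def by (auto split: if_splits)
      then have "\<not> cwr k (\<sigma> x)" using xI unfolding CW_def cwr_def by auto
      then have "ccr k (\<sigma> x)" using route_cases[OF k(1) r] by blast
      then show ?thesis using ccr_B[OF k(1)] \<open>a \<in> B k\<close> xI by auto
    qed
  qed
  then have "flow I \<sigma> a = measure lebesgue (\<Union>k\<in>L. U k)" unfolding flow_def by simp
  also have "\<dots> = (\<Sum>k\<in>L. measure lebesgue (U k))"
  proof (rule measure_finite_Union[OF finL])
    show "U ` L \<subseteq> sets lebesgue" using Umeas by auto
    show "disjoint_family_on U L" unfolding disjoint_family_on_def
      using Usub unfolding Ik_def by blast
    show "\<And>i. i \<in> L \<Longrightarrow> emeasure lebesgue (U i) \<noteq> \<infinity>"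
      using fin_meas Umeas Usub IkI by blast
  qed
  also have "\<dots> = (\<Sum>k\<in>L. (if a \<in> A k then alpha \<sigma> k else 0) + (if a \<in> B k then mm k - alpha \<sigma> k else 0))"
  proof (rule sum.cong[OF refl])
    fix k assume k: "k \<in> L"
    have md: "measure lebesgue (Ik k - CW \<sigma> k) = mm k - alpha \<sigma> k"
      unfolding mm_def alpha_def
      using measure_Diff[OF fin_meas[OF IkI Ik_meas[OF k]] Ik_meas[OF k] CW_meas[OF eq k] CW_sub] .
    show "measure lebesgue (U k) = (if a \<in> A k then alpha \<sigma> k else 0) + (if a \<in> B k then mm k - alpha \<sigma> k else 0)"
      unfolding U_def using md AB_disj[of a k k] by (auto simp: alpha_def)
  qed
  finally show ?thesis .
qed

end



context setting begin

definition dd where "dd \<sigma>1 \<sigma>2 k = alpha \<sigma>1 k - alpha \<sigma>2 k"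
definition chi :: "'v \<times> 'v \<Rightarrow> 'v \<times> 'v \<Rightarrow> real" where
  "chi k a = (if a \<in> A k then 1 else 0) - (if a \<in> B k then 1 else 0)"

lemma delta:
  assumes e1: "is_equilibrium E I od c \<sigma>1" and e2: "is_equilibrium E I od c \<sigma>2"
  shows "flow I \<sigma>1 a - flow I \<sigma>2 a = (\<Sum>k\<in>L. chi k a * dd \<sigma>1 \<sigma>2 k)"
  unfolding decomp[OF e1] decomp[OF e2] sum_subtractf[symmetric]
proof (rule sum.cong[OF refl])
  fix k assume "k \<in> L"
  show "(if a \<in> A k then alpha \<sigma>1 k else 0) + (if a \<in> B k then mm k - alpha \<sigma>1 k else 0) -
         ((if a \<in> A k then alpha \<sigma>2 k else 0) + (if a \<in> B k then mm k - alpha \<sigma>2 k else 0)) =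
         chi k a * dd \<sigma>1 \<sigma>2 k"
    using AB_disj[of a k k] unfolding chi_def dd_def by (cases "a \<in> A k"; cases "a \<in> B k") auto
qed

lemma route_darcs: "is_route E s t p \<Longrightarrow> route_arcs p \<subseteq> darcs E"
  unfolding is_route_def by (intro route_arcs_sub) auto

lemma eq_opt: "is_equilibrium E I od c \<sigma> \<Longrightarrow> x \<in> I \<Longrightarrow> is_route E (fst (od x)) (snd (od x)) q
  \<Longrightarrow> route_cost c x (\<sigma> x) (flow I \<sigma>) \<le> route_cost c x q (flow I \<sigma>)"
  unfolding is_equilibrium_def by blast

lemma IkI: "Ik k \<subseteq> I" unfolding Ik_def by auto

lemma main:
  assumes e1: "is_equilibrium E I od c \<sigma>1" and e2: "is_equilibrium E I od c \<sigma>2"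
    and l: "l \<in> L" and pos: "dd \<sigma>1 \<sigma>2 l > 0" and mx: "\<And>k. k \<in> L \<Longrightarrow> \<bar>dd \<sigma>1 \<sigma>2 k\<bar> \<le> dd \<sigma>1 \<sigma>2 l"
  shows "\<exists>k\<in>L. k \<noteq> l \<and> dd \<sigma>1 \<sigma>2 k = - dd \<sigma>1 \<sigma>2 l \<and> A l \<subseteq> A k \<and> (\<exists>p. cwr l p)"
proof -
  define d where "d = dd \<sigma>1 \<sigma>2"
  have "\<not> CW \<sigma>1 l \<subseteq> CW \<sigma>2 l"
  proof
    assume H: "CW \<sigma>1 l \<subseteq> CW \<sigma>2 l"
    have "CW \<sigma>2 l \<in> lmeasurable" using lmeas CW_meas[OF e2 l] CW_sub IkI by blast
    then have "alpha \<sigma>1 l \<le> alpha \<sigma>2 l" unfolding alpha_def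
      using measure_mono_fmeasurable[OF H CW_meas[OF e1 l]] by blast
    then show False using pos unfolding dd_def by simp
  qed
  then obtain x where x1: "x \<in> CW \<sigma>1 l" "x \<notin> CW \<sigma>2 l" by blast
  have xI: "x \<in> I" "od x = l" using x1 unfolding CW_def by auto
  have r1: "isr l (\<sigma>1 x)" and r2: "isr l (\<sigma>2 x)" using eq_route[OF e1 xI(1)] eq_route[OF e2 xI(1)] xI by auto
  have c1: "cwr l (\<sigma>1 x)" using r1 x1 xI unfolding CW_def cwr_def by auto
  have "\<not> cwr l (\<sigma>2 x)" using x1 xI unfolding CW_def cwr_def by auto
  then have c2: "ccr l (\<sigma>2 x)" using route_cases[OF l r2] by blast
  have A1: "route_arcs (\<sigma>1 x) = A l" using cwr_A[OF l c1] .
  have B2: "route_arcs (\<sigma>2 x) = B l" using ccr_B[OF l c2] .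
  define F1 where "F1 = flow I \<sigma>1"
  define F2 where "F2 = flow I \<sigma>2"
  define R where "R a = (\<Sum>k\<in>L-{l}. chi k a * d k)" for a
  have splitD: "F1 a - F2 a = chi l a * d l + R a" for a
    unfolding F1_def F2_def R_def d_def delta[OF e1 e2] using sum.remove[OF finL l] by simp
  have cardL1: "card (L - {l}) \<le> 1" using cardL l finL by (simp add: card_Diff_singleton)
  have Rb: "\<bar>R a\<bar> \<le> d l" for a
  proof -
    have "\<bar>R a\<bar> \<le> (\<Sum>k\<in>L-{l}. \<bar>chi k a * d k\<bar>)" unfolding R_def by (rule sum_abs)
    also have "\<dots> \<le> (\<Sum>k\<in>L-{l}. d l)"
    proof (rule sum_mono)
      fix k assume k: "k \<in> L - {l}"
      have "\<bar>chi k a\<bar> \<le> 1" unfolding chi_def by auto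
      moreover have "\<bar>d k\<bar> \<le> d l" using mx k unfolding d_def by auto
      ultimately have "\<bar>chi k a\<bar> * \<bar>d k\<bar> \<le> 1 * d l" by (intro mult_mono) auto
      then show "\<bar>chi k a * d k\<bar> \<le> d l" by (simp add: abs_mult)
    qed
    also have "\<dots> = real (card (L - {l})) * d l" by simp
    also have "\<dots> \<le> 1 * d l" using cardL1 pos unfolding d_def by (intro mult_right_mono) auto
    finally show ?thesis by simp
  qed
  have chiA: "a \<in> A l \<Longrightarrow> chi l a = 1" for a using AB_disj[of a l l] unfolding chi_def by auto
  have chiB: "a \<in> B l \<Longrightarrow> chi l a = -1" for a using AB_disj[of a l l] unfolding chi_def by auto
  have geA: "a \<in> A l \<Longrightarrow> F2 a \<le> F1 a" for a using splitD[of a] chiA[of a] Rb[of a] by auto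
  have leB: "a \<in> B l \<Longrightarrow> F1 a \<le> F2 a" for a using splitD[of a] chiB[of a] Rb[of a] by auto
  have nn1: "0 \<le> F1 a" and nn2: "0 \<le> F2 a" for a unfolding F1_def F2_def flow_def by auto
  have Ad: "A l \<subseteq> darcs E" using route_darcs r1 A1 unfolding isr_def by blast
  have Bd: "B l \<subseteq> darcs E" using route_darcs r2 B2 unfolding isr_def by blast
  have cst: "strict_mono_on {0..} (c x a)" if "a \<in> darcs E" for a
    using vc that xI unfolding valid_costs_def by blast
  have smono: "c x a u < c x a v" if "a \<in> darcs E" "0 \<le> u" "u < v" for a u v
    using strict_mono_onD[OF cst[OF that(1)]] that by auto
  have mono: "c x a u \<le> c x a v" if "a \<in> darcs E" "0 \<le> u" "u \<le> v" for a u v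
  proof (cases "u = v")
    case False
    then have "u < v" using that(3) by simp
    then show ?thesis using smono[OF that(1,2)] by (simp add: less_imp_le)
  qed simp
  have fin: "finite (A l)" "finite (B l)" using A1 B2 unfolding route_arcs_def by (metis finite_set)+
  have rc: "route_cost c x (\<sigma>1 x) F = (\<Sum>a\<in>A l. c x a (F a))"
    "route_cost c x (\<sigma>2 x) F = (\<Sum>a\<in>B l. c x a (F a))" for F
    unfolding route_cost_def A1 B2 by auto
  have isq: "is_route E (fst (od x)) (snd (od x)) (\<sigma>2 x)" "is_route E (fst (od x)) (snd (od x)) (\<sigma>1 x)"
    using r1 r2 xI unfolding isr_def by auto
  have q1: "(\<Sum>a\<in>A l. c x a (F1 a)) \<le> (\<Sum>a\<in>B l. c x a (F1 a))"
    using eq_opt[OF e1 xI(1) isq(1)] rc(1)[of F1] rc(2)[of F1] unfolding F1_def by simp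
  have q2: "(\<Sum>a\<in>B l. c x a (F2 a)) \<le> (\<Sum>a\<in>A l. c x a (F2 a))"
    using eq_opt[OF e2 xI(1) isq(2)] rc(1)[of F2] rc(2)[of F2] unfolding F2_def by simp
  have q3: "(\<Sum>a\<in>B l. c x a (F1 a)) \<le> (\<Sum>a\<in>B l. c x a (F2 a))"
    using mono leB nn1 Bd by (intro sum_mono) blast
  have q4: "(\<Sum>a\<in>A l. c x a (F2 a)) \<le> (\<Sum>a\<in>A l. c x a (F1 a))"
    using mono geA nn2 Ad by (intro sum_mono) blast
  have sum0: "(\<Sum>a\<in>A l. c x a (F1 a) - c x a (F2 a)) = 0"
    unfolding sum_subtractf using q1 q2 q3 q4 by linarith
  have nnz: "0 \<le> c x a (F1 a) - c x a (F2 a)" if a: "a \<in> A l" for a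
    using mono[OF subsetD[OF Ad a] nn2 geA[OF a]] by simp
  have z: "\<forall>a\<in>A l. c x a (F1 a) - c x a (F2 a) = 0"
    using iffD1[OF sum_nonneg_eq_0_iff[OF fin(1) nnz] sum0] .
  have eqA: "F1 a = F2 a" if a: "a \<in> A l" for a
  proof (rule ccontr)
    assume "F1 a \<noteq> F2 a"
    then have "F2 a < F1 a" using geA[OF a] by auto
    then have "c x a (F2 a) < c x a (F1 a)" using smono[OF subsetD[OF Ad a] nn2] by blast
    then show False using z a by auto
  qed
  have z2: "d l + R a = 0" if "a \<in> A l" for a using splitD[of a] eqA[OF that] chiA[OF that] by simp
  obtain a0 where a0: "a0 \<in> A l" using A1 isr_arcs_ne[OF l r1] by auto
  show ?thesis
  proof (cases "L - {l} = {}")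
    case True
    then have "R a0 = 0" unfolding R_def by (simp only: sum.empty)
    then show ?thesis using z2[OF a0] pos unfolding d_def by simp
  next
    case False
    then have "card (L - {l}) \<noteq> 0" using finL by simp
    then have "card (L - {l}) = 1" using cardL1 by simp
    then obtain k where k: "L - {l} = {k}" by (rule card_1_singletonE)
    then have kL: "k \<in> L" "k \<noteq> l" by auto
    have Rk: "R a = chi k a * d k" for a unfolding R_def k by simp
    have "a0 \<notin> B k" using AB_disj[of a0 l k] a0 by blast
    moreover have "a0 \<in> A k"
    proof (rule ccontr)
      assume "a0 \<notin> A k"
      then have "chi k a0 = 0" using \<open>a0 \<notin> B k\<close> unfolding chi_def by simp
      then show False using z2[OF a0] Rk[of a0] pos unfolding d_def by simp
    qed
    ultimately have "chi k a0 = 1" unfolding chi_def by simp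
    then have dk: "d k = - d l" using z2[OF a0] Rk[of a0] by simp
    have "A l \<subseteq> A k"
    proof
      fix a assume a: "a \<in> A l"
      have "chi k a * d l = d l" using z2[OF a] Rk[of a] dk by simp
      then have "chi k a = 1" using pos unfolding d_def by simp
      then show "a \<in> A k" unfolding chi_def by (auto split: if_splits)
    qed
    then show ?thesis using kL dk c1 unfolding d_def by blast
  qed
qed

end



context setting begin

lemma dd_swap: "dd \<sigma>2 \<sigma>1 k = - dd \<sigma>1 \<sigma>2 k" unfolding dd_def by simp

lemma no_pos:
  assumes e1: "is_equilibrium E I od c \<sigma>1" and e2: "is_equilibrium E I od c \<sigma>2"
    and l: "l \<in> L" and pos: "dd \<sigma>1 \<sigma>2 l > 0" and mx: "\<And>k. k \<in> L \<Longrightarrow> \<bar>dd \<sigma>1 \<sigma>2 k\<bar> \<le> dd \<sigma>1 \<sigma>2 l"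
  shows False
proof -
  obtain k where k: "k \<in> L" "k \<noteq> l" "dd \<sigma>1 \<sigma>2 k = - dd \<sigma>1 \<sigma>2 l" "A l \<subseteq> A k"
    and pl: "\<exists>p. cwr l p" using main[OF e1 e2 l pos mx] by blast
  have pos2: "dd \<sigma>2 \<sigma>1 k > 0" using dd_swap[of \<sigma>2 \<sigma>1 k] k(3) pos by simp
  have mx2: "\<bar>dd \<sigma>2 \<sigma>1 j\<bar> \<le> dd \<sigma>2 \<sigma>1 k" if "j \<in> L" for j
    using mx[OF that] dd_swap[of \<sigma>2 \<sigma>1 j] dd_swap[of \<sigma>2 \<sigma>1 k] k(3) by simp
  obtain k' where k': "k' \<in> L" "k' \<noteq> k" "A k \<subseteq> A k'" and pk: "\<exists>p. cwr k p"
    using main[OF e2 e1 k(1) pos2 mx2] by blast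
  have "k' = l"
  proof (rule ccontr)
    assume "k' \<noteq> l"
    then have "card {l, k, k'} = 3" using k(2) k'(2) by auto
    moreover have "card {l, k, k'} \<le> card L" using l k(1) k'(1) finL by (intro card_mono) auto
    ultimately show False using cardL by simp
  qed
  then have AA: "A l = A k" using k(4) k'(3) by blast
  obtain p q where p: "cwr l p" and q: "cwr k q" using pl pk by blast
  have "route_arcs p = route_arcs q" using cwr_A[OF l p] cwr_A[OF k(1) q] AA by simp
  moreover have ip: "isr l p" and iq: "isr k q" using p q unfolding cwr_def by auto
  ultimately have "hd p = hd q \<and> last p = last q"
    using arcs_endpoints isr_len[OF l ip] isr_len[OF k(1) iq] by blast
  moreover have "hd p = fst l" "last p = snd l" "hd q = fst k" "last q = snd k"
    using ip iq unfolding isr_def is_route_def by auto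
  ultimately have "l = k" by (simp add: prod_eq_iff)
  then show False using k(2) by simp
qed

lemma flows_eq:
  assumes e1: "is_equilibrium E I od c \<sigma>1" and e2: "is_equilibrium E I od c \<sigma>2"
  shows "flow I \<sigma>1 a = flow I \<sigma>2 a"
proof (cases "\<forall>k\<in>L. dd \<sigma>1 \<sigma>2 k = 0")
  case True
  then have "(\<Sum>k\<in>L. chi k a * dd \<sigma>1 \<sigma>2 k) = 0" by simp
  then show ?thesis using delta[OF e1 e2, of a] by simp
next
  case False
  then obtain k0 where k0: "k0 \<in> L" "dd \<sigma>1 \<sigma>2 k0 \<noteq> 0" by blast
  define M where "M = Max ((\<lambda>k. \<bar>dd \<sigma>1 \<sigma>2 k\<bar>) ` L)"
  have Lne: "L \<noteq> {}" using k0 by auto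
  have "M \<in> (\<lambda>k. \<bar>dd \<sigma>1 \<sigma>2 k\<bar>) ` L" unfolding M_def using finL Lne by (intro Max_in) auto
  then obtain l where l: "l \<in> L" "\<bar>dd \<sigma>1 \<sigma>2 l\<bar> = M" by auto
  have mxM: "\<bar>dd \<sigma>1 \<sigma>2 k\<bar> \<le> M" if "k \<in> L" for k unfolding M_def using finL that by (intro Max_ge) auto
  have "M > 0" using mxM[OF k0(1)] k0(2) by linarith
  show ?thesis
  proof (cases "dd \<sigma>1 \<sigma>2 l > 0")
    case True
    have "\<bar>dd \<sigma>1 \<sigma>2 k\<bar> \<le> dd \<sigma>1 \<sigma>2 l" if "k \<in> L" for k using mxM[OF that] l(2) True by simp
    then show ?thesis using no_pos[OF e1 e2 l(1) True] by blast
  next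
    case False
    then have neg: "dd \<sigma>1 \<sigma>2 l < 0" using l(2) \<open>M > 0\<close> by auto
    then have pos: "dd \<sigma>2 \<sigma>1 l > 0" using dd_swap[of \<sigma>2 \<sigma>1 l] by simp
    have "\<bar>dd \<sigma>2 \<sigma>1 k\<bar> \<le> dd \<sigma>2 \<sigma>1 l" if "k \<in> L" for k
      using mxM[OF that] l(2) neg dd_swap[of \<sigma>2 \<sigma>1 k] dd_swap[of \<sigma>2 \<sigma>1 l] by simp
    then show ?thesis using no_pos[OF e2 e1 l(1) pos] by blast
  qed
qed

end

theorem corollary1:
  fixes V :: "'v set" and E :: "'v set set" and T :: "'v set" and L :: "('v \<times> 'v) set"
    and I :: "real set"
  assumes "is_interval I" and "bounded I"
    and "is_cycle V E"
    and "demand_digraph V T L"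
    and "card L \<le> 2"
  shows "uniqueness_property I V E T L"
  unfolding uniqueness_property_def
proof (intro allI impI ballI)
  fix od :: "real \<Rightarrow> 'v \<times> 'v" and c \<sigma>1 \<sigma>2 a
  assume vp: "valid_partition L I od" and vc: "valid_costs E I c"
    and e1: "is_equilibrium E I od c \<sigma>1" and e2: "is_equilibrium E I od c \<sigma>2"
  obtain n f where n: "3 \<le> n" "bij_betw f {..<n} V" "E = {{f i, f (Suc i mod n)} | i. i < n}"
    and sg: "supply_graph V E" using assms(3) unfolding is_cycle_def by blast
  have fV: "finite V" using sg unfolding supply_graph_def by blast
  have LT: "L \<subseteq> V \<times> V" using assms(4) unfolding demand_digraph_def by blast
  have finL: "finite L" using finite_subset[OF LT] fV by blast
  have Lne: "\<And>s t. (s,t) \<in> L \<Longrightarrow> s \<noteq> t" using assms(4) unfolding demand_digraph_def by blast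
  interpret S: setting V E n f I L od c
    by unfold_locales (use n assms(2,5) vp vc finL Lne in auto)
  show "flow I \<sigma>1 a = flow I \<sigma>2 a" using S.flows_eq[OF e1 e2] .
qed



end
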